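(* Let $E_t$ be the set of the first $m_t$ edges of a temporal graph stream, $M$ a temporal motif with $3$ edges, $\delta\ge0$, $q\in(0,1]$, and $r$ an integer with $1\le r\le m_t$. Let $\widehat E_t$ be a uniformly random $r$-element subset of $E_t$, let $(\omega_{e,g})_{e\in E_t,g\in E(e)}$ be independent Bernoulli($q$) variables independent of $\widehat E_t$, and let $$\widehat C_{M,t}=\frac{m_t}{rq}\sum_{e\in\widehat E_t}\sum_{g\in E(e)}\omega_{e,g}\,\eta(W_{e,g}).$$ Then $\mathrm{Var}[\widehat C_{M,t}]\le\frac{m_t-rq}{rq}\,C_{M,t}^2$.
   Context: A temporal graph stream is a sequence of temporal edges $(u,v,t)$ (directed edge from vertex $u$ to vertex $v$ with timestamp $t\in\mathbb{R}^+$, timestamps pairwise distinct) arriving in increasing order of timestamp; $E_t$ is the set of the $m_t$ edges with timestamp at most $t$. A temporal motif $M$ is an ordered sequence of $l$ directed edges $\langle e'_1=(u'_1,v'_1),\dots,e'_l=(u'_l,v'_l)\rangle$ on a vertex set $V_M$ whose underlying graph is connected; here $l=3$. A sequence $\langle (w_1,x_1,t_1),\dots,(w_l,x_l,t_l)\rangle$ of edges with $t_1<\dots<t_l$ is a $\delta$-instance of $M$ if there is a bijection $f$ from its vertices to $V_M$ with $f(w_i)=u'_i$, $f(x_i)=v'_i$ for all $i$, and $t_l-t_1\le\delta$. $C_{M,t}$ is the number of $\delta$-instances of $M$ among the edges of $E_t$. For $e\in E_t$, $\eta(e)$ denotes the number of $\delta$-instances of $M$ whose last (third) edge is $e$. Wedge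 data: for each edge $e$ there is a finite set $E(e)$ of earlier edges and for each $g\in E(e)$ a nonnegative integer $\eta(W_{e,g})$ (the number of $\delta$-instances of $M$ containing the temporal wedge formed by $e$ and $g$, with $e$ mapped to $e'_3$), such that $\sum_{g\in E(e)}\eta(W_{e,g})=\eta(e)$. *)

theory Defs
  imports "HOL-Probability.Probability" "HOL-Probability.Product_PMF"
begin

type_synonym 'v tedge = "'v \<times> 'v \<times> real"

definition src :: "'v tedge \<Rightarrow> 'v" where "src e = fst e"
definition dst :: "'v tedge \<Rightarrow> 'v" where "dst e = fst (snd e)"
definition tm :: "'v tedge \<Rightarrow> real" where "tm e = snd (snd e)"

definition motif_vertices :: "('w \<times> 'w) list \<Rightarrow> 'w set" where
  "motif_vertices M = (\<Union>(a, b)\<in>set M. {a, b})"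

definition motif_connected :: "('w \<times> 'w) list \<Rightarrow> bool" where
  "motif_connected M =
     (\<forall>a\<in>motif_vertices M. \<forall>b\<in>motif_vertices M.
        (\<lambda>x y. (x, y) \<in> set M \<or> (y, x) \<in> set M)\<^sup>*\<^sup>* a b)"

definition seq_vertices :: "'v tedge list \<Rightarrow> 'v set" where
  "seq_vertices xs = (\<Union>e\<in>set xs. {src e, dst e})"

definition delta_instance :: "('w \<times> 'w) list \<Rightarrow> real \<Rightarrow> 'v tedge list \<Rightarrow> bool" where
  "delta_instance M \<delta> xs =
     (length xs = length M \<and> xs \<noteq> [] \<and>
      sorted_wrt (\<lambda>a b. tm a < tm b) xs \<and>
      (\<exists>f. bij_betw f (seq_vertices xs) (motif_vertices M) \<and>
           (\<forall>i<length xs. f (src (xs ! i)) = fst (M ! i) \<and> f (dst (xs ! i)) = snd (M ! i))) \<and>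
      tm (last xs) - tm (hd xs) \<le> \<delta>)"

definition motif_count :: "('w \<times> 'w) list \<Rightarrow> real \<Rightarrow> 'v tedge set \<Rightarrow> nat" where
  "motif_count M \<delta> Et = card {xs. set xs \<subseteq> Et \<and> delta_instance M \<delta> xs}"

definition eta :: "('w \<times> 'w) list \<Rightarrow> real \<Rightarrow> 'v tedge set \<Rightarrow> 'v tedge \<Rightarrow> nat" where
  "eta M \<delta> Et e = card {xs. set xs \<subseteq> Et \<and> delta_instance M \<delta> xs \<and> last xs = e}"

definition sample_pmf ::
  "'v tedge set \<Rightarrow> ('v tedge \<Rightarrow> 'v tedge set) \<Rightarrow> nat \<Rightarrow> real
     \<Rightarrow> ('v tedge set \<times> ('v tedge \<times> 'v tedge \<Rightarrow> bool)) pmf" where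
  "sample_pmf Et Ew r q =
     pair_pmf (pmf_of_set {S. S \<subseteq> Et \<and> card S = r})
              (Pi_pmf (SIGMA e:Et. Ew e) False (\<lambda>_. bernoulli_pmf q))"

definition estimator ::
  "'v tedge set \<Rightarrow> ('v tedge \<Rightarrow> 'v tedge set) \<Rightarrow> ('v tedge \<Rightarrow> 'v tedge \<Rightarrow> nat) \<Rightarrow> nat \<Rightarrow> real
     \<Rightarrow> 'v tedge set \<times> ('v tedge \<times> 'v tedge \<Rightarrow> bool) \<Rightarrow> real" where
  "estimator Et Ew W r q = (\<lambda>(S, \<omega>).
     real (card Et) / (real r * q) *
       (\<Sum>e\<in>S. \<Sum>g\<in>Ew e. (if \<omega> (e, g) then 1 else 0) * real (W e g)))"

end

theory Submission
  imports Defs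
begin
lemma exp_pair_prod:
  fixes f :: "'a \<Rightarrow> real" and g :: "'b \<Rightarrow> real"
  assumes fa: "finite (set_pmf A)" and fb: "finite (set_pmf B)"
  shows "measure_pmf.expectation (pair_pmf A B) (\<lambda>x. f (fst x) * g (snd x))
       = measure_pmf.expectation A f * measure_pmf.expectation B g"
proof -
  have "measure_pmf.expectation (pair_pmf A B) (\<lambda>x. f (fst x) * g (snd x))
      = (\<Sum>x\<in>set_pmf A \<times> set_pmf B. pmf (pair_pmf A B) x *\<^sub>R (f (fst x) * g (snd x)))"
    by (rule integral_measure_pmf) (use fa fb in auto)
  also have "\<dots> = (\<Sum>a\<in>set_pmf A. \<Sum>b\<in>set_pmf B. (pmf A a * f a) * (pmf B b * g b))"
    by (simp add: sum.cartesian_product mult_ac case_prod_beta flip: pmf_pair)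
  also have "\<dots> = (\<Sum>a\<in>set_pmf A. pmf A a * f a) * (\<Sum>b\<in>set_pmf B. pmf B b * g b)"
    by (simp add: sum_product)
  also have "(\<Sum>a\<in>set_pmf A. pmf A a * f a) = measure_pmf.expectation A f"
    by (subst integral_measure_pmf[of "set_pmf A"]) (use fa in auto)
  also have "(\<Sum>b\<in>set_pmf B. pmf B b * g b) = measure_pmf.expectation B g"
    by (subst integral_measure_pmf[of "set_pmf B"]) (use fb in auto)
  finally show ?thesis .
qed

lemma exp_cong_pmf:
  fixes f g :: "'a \<Rightarrow> real"
  assumes "\<And>x. x \<in> set_pmf p \<Longrightarrow> f x = g x"
  shows "measure_pmf.expectation p f = measure_pmf.expectation p g"
  by (rule integral_cong_AE) (auto simp: AE_measure_pmf_iff assms)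

lemma var_cong_pmf:
  fixes f g :: "'a \<Rightarrow> real"
  assumes "\<And>x. x \<in> set_pmf p \<Longrightarrow> f x = g x"
  shows "measure_pmf.variance p f = measure_pmf.variance p g"
proof -
  have e: "measure_pmf.expectation p f = measure_pmf.expectation p g" by (rule exp_cong_pmf[OF assms])
  show ?thesis unfolding e by (rule exp_cong_pmf) (simp add: assms)
qed

lemma Pi_coin_finite:
  assumes "finite I"
  shows "finite (set_pmf (Pi_pmf I False (\<lambda>_. bernoulli_pmf q)))"
proof -
  have "set_pmf (Pi_pmf I False (\<lambda>_. bernoulli_pmf q)) \<subseteq> (\<lambda>T x. x \<in> T) ` Pow I"
  proof
    fix f assume "f \<in> set_pmf (Pi_pmf I False (\<lambda>_. bernoulli_pmf q))"
    with set_Pi_pmf_subset[OF assms, of False "\<lambda>_. bernoulli_pmf q"] have h: "\<forall>x. x \<notin> I \<longrightarrow> f x = False" by blast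
    have "f = (\<lambda>x. x \<in> {x. f x})" by auto
    moreover have "{x. f x} \<in> Pow I" using h by auto
    ultimately show "f \<in> (\<lambda>T x. x \<in> T) ` Pow I" by blast
  qed
  thus ?thesis using assms by (meson finite_Pow_iff finite_imageI finite_subset)
qed

lemma Pi_coin_exp:
  assumes "finite I" "i \<in> I" "0 \<le> q" "q \<le> 1"
  shows "measure_pmf.expectation (Pi_pmf I False (\<lambda>_. bernoulli_pmf q)) (\<lambda>\<omega>. if \<omega> i then 1 else 0 :: real) = q"
proof -
  have "measure_pmf.expectation (Pi_pmf I False (\<lambda>_. bernoulli_pmf q)) (\<lambda>\<omega>. if \<omega> i then 1 else 0 :: real)
     = measure_pmf.expectation (map_pmf (\<lambda>f. f i) (Pi_pmf I False (\<lambda>_. bernoulli_pmf q))) (\<lambda>b. if b then 1 else 0 :: real)"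
    by simp
  also have "\<dots> = measure_pmf.expectation (bernoulli_pmf q) (\<lambda>b. if b then 1 else 0 :: real)"
    using Pi_pmf_component[OF assms(1), of i False "\<lambda>_. bernoulli_pmf q"] assms(2) by simp
  also have "\<dots> = q" using assms by simp
  finally show ?thesis .
qed

lemma subset_exp:
  assumes fin: "finite E" and e: "e \<in> E" and r: "1 \<le> r" "r \<le> card E"
  shows "measure_pmf.expectation (pmf_of_set {S. S \<subseteq> E \<and> card S = r}) (\<lambda>S. if e \<in> S then 1 else 0 :: real)
     = real r / real (card E)"
proof -
  let ?A = "{S. S \<subseteq> E \<and> card S = r}"
  have finA: "finite ?A" using fin by auto
  have cA: "card ?A = card E choose r" by (rule n_subsets[OF fin])
  have pos: "card E choose r > 0" using r by simp
  have neA: "?A \<noteq> {}" using cA pos by (metis card.empty less_irrefl)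
  have "(\<Sum>S\<in>?A. if e \<in> S then 1 else 0 :: real) = real (card {S\<in>?A. e \<in> S})"
    using finA by (simp add: sum.If_cases Int_def conj_ac)
  also have "{S\<in>?A. e \<in> S} = insert e ` {T. T \<subseteq> E - {e} \<and> card T = r - 1}"
  proof (rule set_eqI, rule iffI)
    fix S assume S: "S \<in> {S\<in>?A. e \<in> S}"
    have "finite S" using S fin finite_subset by blast
    hence "card (S - {e}) = r - 1" using S by auto
    moreover have "S = insert e (S - {e})" using S by auto
    ultimately show "S \<in> insert e ` {T. T \<subseteq> E - {e} \<and> card T = r - 1}" using S by blast
  next
    fix S assume "S \<in> insert e ` {T. T \<subseteq> E - {e} \<and> card T = r - 1}"
    then obtain T where T: "T \<subseteq> E - {e}" "card T = r - 1" "S = insert e T" by auto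
    have "finite T" using T fin finite_subset by blast
    moreover have "e \<notin> T" using T by auto
    ultimately have "card S = r" using T r by simp
    thus "S \<in> {S\<in>?A. e \<in> S}" using T e by auto
  qed
  also have "card \<dots> = card {T. T \<subseteq> E - {e} \<and> card T = r - 1}"
    by (rule card_image) (auto intro!: inj_onI)
  also have "\<dots> = (card E - 1) choose (r - 1)" using n_subsets[of "E - {e}" "r - 1"] fin e by simp
  finally have num: "(\<Sum>S\<in>?A. if e \<in> S then 1 else 0 :: real) = real ((card E - 1) choose (r - 1))" .
  have key: "real r * real (card E choose r) = real (card E) * real ((card E - 1) choose (r - 1))"
    using times_binomial_minus1_eq[of r "card E"] r by (metis of_nat_mult less_le_trans zero_less_one)
  have cE: "card E > 0" using r by linarith
  show ?thesis
    using num key cA cE pos by (simp add: integral_pmf_of_set[OF neA finA] field_simps)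
qed

theorem theorem8:
  fixes Et :: "'v tedge set" and M :: "('w \<times> 'w) list" and \<delta> q :: real and r :: nat
    and Ew :: "'v tedge \<Rightarrow> 'v tedge set" and W :: "'v tedge \<Rightarrow> 'v tedge \<Rightarrow> nat"
  assumes fin: "finite Et"
    and times_pos: "\<forall>e\<in>Et. tm e > 0"
    and times_distinct: "inj_on tm Et"
    and motif_len: "length M = 3"
    and motif_conn: "motif_connected M"
    and delta: "\<delta> \<ge> 0"
    and q: "0 < q" "q \<le> 1"
    and r: "1 \<le> r" "r \<le> card Et"
    and wedge_fin: "\<forall>e\<in>Et. finite (Ew e)"
    and wedge_earlier: "\<forall>e\<in>Et. Ew e \<subseteq> {g\<in>Et. tm g < tm e}"
    and wedge_sum: "\<forall>e\<in>Et. (\<Sum>g\<in>Ew e. W e g) = eta M \<delta> Et e"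
  shows "measure_pmf.variance (sample_pmf Et Ew r q) (estimator Et Ew W r q)
           \<le> (real (card Et) - real r * q) / (real r * q) * (real (motif_count M \<delta> Et))\<^sup>2"
proof -
  define m where "m = real (card Et)"
  define A where "A = {S. S \<subseteq> Et \<and> card S = r}"
  define I where "I = (SIGMA e:Et. Ew e)"
  define PA where "PA = pmf_of_set A"
  define PB where "PB = Pi_pmf I False (\<lambda>_. bernoulli_pmf q)"
  define p where "p = pair_pmf PA PB"
  define K where "K = m / (real r * q)"
  define C where "C = real (motif_count M \<delta> Et)"
  define a where "a = (\<lambda>(i::'v tedge \<times> 'v tedge) S. if fst i \<in> S then 1 else 0 :: real)"
  define c where "c = (\<lambda>(i::'v tedge \<times> 'v tedge) (\<omega>::'v tedge \<times> 'v tedge \<Rightarrow> bool). if \<omega> i then 1 else 0 :: real)"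
  define w where "w = (\<lambda>i::'v tedge \<times> 'v tedge. real (W (fst i) (snd i)))"
  define Y where "Y = (\<lambda>x::'v tedge set \<times> ('v tedge \<times> 'v tedge \<Rightarrow> bool). \<Sum>i\<in>I. a i (fst x) * c i (snd x) * w i)"
  have finI: "finite I" unfolding I_def using fin wedge_fin by auto
  have finA: "finite A" unfolding A_def using fin by auto
  have cA: "card A = card Et choose r" unfolding A_def by (rule n_subsets[OF fin])
  have neA: "A \<noteq> {}" using cA r by (metis card.empty less_irrefl zero_less_binomial_iff)
  have sPA: "set_pmf PA = A" unfolding PA_def using finA neA by simp
  have fPA: "finite (set_pmf PA)" using sPA finA by simp
  have fPB: "finite (set_pmf PB)" unfolding PB_def by (rule Pi_coin_finite[OF finI])
  have fp: "finite (set_pmf p)" unfolding p_def using fPA fPB by simp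
  have integ: "\<And>f::_ \<Rightarrow> real. integrable p f" using fp by (rule integrable_measure_pmf_finite)
  have mpos: "m > 0" unfolding m_def using r by simp
  have rq: "real r * q > 0" using r q by simp
  have rqm: "real r * q \<le> m"
  proof -
    have "real r * q \<le> real r * 1" using q by (intro mult_left_mono) auto
    also have "\<dots> \<le> m" unfolding m_def using r by simp
    finally show ?thesis .
  qed

  have est: "estimator Et Ew W r q x = K * Y x" if "x \<in> set_pmf p" for x
  proof -
    obtain S \<omega> where x: "x = (S, \<omega>)" by (cases x)
    have S: "S \<subseteq> Et" using that sPA unfolding x p_def A_def by auto
    have "Y x = (\<Sum>e\<in>Et. \<Sum>g\<in>Ew e. a (e, g) S * c (e, g) \<omega> * w (e, g))"
      unfolding Y_def I_def x using fin wedge_fin by (subst sum.Sigma) auto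
    also have "\<dots> = (\<Sum>e\<in>Et. if e \<in> S then (\<Sum>g\<in>Ew e. (if \<omega> (e, g) then 1 else 0) * real (W e g)) else 0)"
      unfolding a_def c_def w_def by (intro sum.cong) auto
    also have "\<dots> = (\<Sum>e\<in>S. \<Sum>g\<in>Ew e. (if \<omega> (e, g) then 1 else 0) * real (W e g))"
      using sum.inter_restrict[OF fin, of "\<lambda>e. \<Sum>g\<in>Ew e. (if \<omega> (e, g) then 1 else 0) * real (W e g)" S] S
      by (simp add: Int_absorb1)
    finally show ?thesis unfolding x estimator_def K_def m_def by simp
  qed

  have sumw: "(\<Sum>i\<in>I. w i) = C"
  proof -
    define L where "L = {xs. set xs \<subseteq> Et \<and> delta_instance M \<delta> xs}"
    have finL: "finite L"
    proof (rule finite_subset)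
      show "L \<subseteq> {xs. set xs \<subseteq> Et \<and> length xs = length M}" unfolding L_def delta_instance_def by auto
      show "finite {xs. set xs \<subseteq> Et \<and> length xs = length M}" using fin by (rule finite_lists_length_eq)
    qed
    have img: "last ` L \<subseteq> Et" unfolding L_def delta_instance_def by auto
    have "C = real (card L)" unfolding C_def motif_count_def L_def by simp
    also have "\<dots> = (\<Sum>xs\<in>L. 1)" by simp
    also have "\<dots> = (\<Sum>e\<in>Et. \<Sum>xs\<in>{xs. xs \<in> L \<and> last xs = e}. 1)"
      by (rule sum.group[symmetric, OF finL fin img])
    also have "\<dots> = (\<Sum>e\<in>Et. real (eta M \<delta> Et e))"
      by (intro sum.cong refl) (simp add: eta_def L_def conj_assoc)
    also have "\<dots> = (\<Sum>e\<in>Et. \<Sum>g\<in>Ew e. real (W e g))"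
      using wedge_sum by (intro sum.cong refl) (simp flip: of_nat_sum)
    also have "\<dots> = (\<Sum>i\<in>I. w i)"
      unfolding I_def w_def using fin wedge_fin by (subst sum.Sigma) (auto simp: case_prod_beta)
    finally show ?thesis by simp
  qed
  have wnn: "\<And>i. w i \<ge> 0" unfolding w_def by simp

  have Ea: "measure_pmf.expectation PA (a i) = real r / m" if "i \<in> I" for i
    unfolding PA_def A_def a_def m_def using subset_exp[OF fin _ r] that I_def by auto
  have Ec: "measure_pmf.expectation PB (c i) = q" if "i \<in> I" for i
    unfolding PB_def c_def using Pi_coin_exp[OF finI that] q by simp

  have EY: "measure_pmf.expectation p Y = real r / m * q * C"
  proof -
    have "measure_pmf.expectation p Y = (\<Sum>i\<in>I. measure_pmf.expectation p (\<lambda>x. a i (fst x) * c i (snd x)) * w i)"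
      unfolding Y_def by (subst Bochner_Integration.integral_sum, rule integ) simp
    also have "\<dots> = (\<Sum>i\<in>I. real r / m * q * w i)"
      unfolding p_def by (intro sum.cong refl) (simp add: exp_pair_prod[OF fPA fPB] Ea Ec)
    also have "\<dots> = real r / m * q * C" by (simp only: sum_distrib_left[symmetric] sumw)
    finally show ?thesis .
  qed
  have EZ: "measure_pmf.expectation p (\<lambda>x. K * Y x) = C"
  proof -
    have "measure_pmf.expectation p (\<lambda>x. K * Y x) = K * (real r / m * q * C)" using EY by simp
    also have "\<dots> = C" using mpos q r by (simp add: K_def field_simps)
    finally show ?thesis .
  qed

  have EY2: "measure_pmf.expectation p (\<lambda>x. (Y x)\<^sup>2) \<le> real r / m * q * C\<^sup>2"
  proof -
    have sq: "(Y x)\<^sup>2 = (\<Sum>i\<in>I. \<Sum>j\<in>I. (a i (fst x) * a j (fst x)) * (c i (snd x) * c j (snd x)) * (w i * w j))" for x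
      unfolding Y_def power2_eq_square sum_product by (intro sum.cong refl) (simp add: mult_ac)
    have "measure_pmf.expectation p (\<lambda>x. (Y x)\<^sup>2)
        = (\<Sum>i\<in>I. \<Sum>j\<in>I. measure_pmf.expectation PA (\<lambda>S. a i S * a j S) * measure_pmf.expectation PB (\<lambda>\<omega>. c i \<omega> * c j \<omega>) * (w i * w j))"
      unfolding sq
      apply (subst Bochner_Integration.integral_sum, rule integ)
      apply (intro sum.cong refl)
      apply (subst Bochner_Integration.integral_sum, rule integ)
      apply (intro sum.cong refl)
      apply (simp add: p_def exp_pair_prod[OF fPA fPB, symmetric])
      done
    also have "\<dots> \<le> (\<Sum>i\<in>I. \<Sum>j\<in>I. (real r / m * q) * (w i * w j))"
    proof (intro sum_mono mult_right_mono)
      fix i j assume i: "i \<in> I" and j: "j \<in> I"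
      show "0 \<le> w i * w j" using wnn by simp
      have "measure_pmf.expectation PA (\<lambda>S. a i S * a j S) \<le> measure_pmf.expectation PA (a i)"
        by (rule integral_mono) (auto intro!: integrable_measure_pmf_finite fPA simp: a_def)
      moreover have "measure_pmf.expectation PB (\<lambda>\<omega>. c i \<omega> * c j \<omega>) \<le> measure_pmf.expectation PB (c i)"
        by (rule integral_mono) (auto intro!: integrable_measure_pmf_finite fPB simp: c_def)
      moreover have "0 \<le> measure_pmf.expectation PA (\<lambda>S. a i S * a j S)"
        by (rule integral_nonneg_AE) (auto simp: a_def)
      moreover have "0 \<le> measure_pmf.expectation PB (\<lambda>\<omega>. c i \<omega> * c j \<omega>)"
        by (rule integral_nonneg_AE) (auto simp: c_def)
      moreover have "0 \<le> measure_pmf.expectation PA (a i)" using Ea[OF i] mpos by simp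
      ultimately have "measure_pmf.expectation PA (\<lambda>S. a i S * a j S) * measure_pmf.expectation PB (\<lambda>\<omega>. c i \<omega> * c j \<omega>)
          \<le> measure_pmf.expectation PA (a i) * measure_pmf.expectation PB (c i)"
        by (intro mult_mono) auto
      thus "measure_pmf.expectation PA (\<lambda>S. a i S * a j S) * measure_pmf.expectation PB (\<lambda>\<omega>. c i \<omega> * c j \<omega>)
          \<le> real r / m * q" using Ea[OF i] Ec[OF i] by simp
    qed
    also have "\<dots> = real r / m * q * C\<^sup>2"
      by (simp only: sum_distrib_left[symmetric] sum_product[symmetric] sumw power2_eq_square sum_distrib_right[symmetric])
    finally show ?thesis .
  qed

  have "measure_pmf.variance (sample_pmf Et Ew r q) (estimator Et Ew W r q)
      = measure_pmf.variance p (\<lambda>x. K * Y x)"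
    unfolding sample_pmf_def p_def[symmetric] PA_def[symmetric] A_def[symmetric] PB_def[symmetric] I_def[symmetric]
    by (rule var_cong_pmf) (rule est)
  also have "\<dots> = measure_pmf.expectation p (\<lambda>x. (K * Y x)\<^sup>2) - C\<^sup>2"
    by (subst measure_pmf.variance_eq) (auto intro: integ simp: EZ[simplified])
  also have "measure_pmf.expectation p (\<lambda>x. (K * Y x)\<^sup>2) = K\<^sup>2 * measure_pmf.expectation p (\<lambda>x. (Y x)\<^sup>2)"
    by (simp add: power_mult_distrib)
  also have "K\<^sup>2 * measure_pmf.expectation p (\<lambda>x. (Y x)\<^sup>2) \<le> K\<^sup>2 * (real r / m * q * C\<^sup>2)"
    by (rule mult_left_mono[OF EY2]) simp
  also have "K\<^sup>2 * (real r / m * q * C\<^sup>2) = K * C\<^sup>2"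
    using mpos q r by (simp add: K_def power2_eq_square field_simps)
  finally have "measure_pmf.variance (sample_pmf Et Ew r q) (estimator Et Ew W r q) \<le> K * C\<^sup>2 - C\<^sup>2"
    by simp
  also have "K * C\<^sup>2 - C\<^sup>2 = (m - real r * q) / (real r * q) * C\<^sup>2"
    using q r by (simp add: K_def field_simps)
  finally show ?thesis unfolding m_def C_def .
qed

end
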